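(* For each basis structure $(L,T,U,\bar e)$ of the transformed problem whose basic solution $x$ is feasible, it holds that $x_e\notin\mathbb{N}_{\ge0}$ for all edges $e$ of the cycle $C(\bar e)$.
   Context: Problem: directed multigraph $G=(V,E)$, capacities $u_e\in\mathbb{N}_{\ge0}$, costs $c_e\in\mathbb{Z}$, usage fees $b_e\in\mathbb{N}_{\ge0}$, budget $B\in\mathbb{N}_{\ge0}$; a feasible flow is $x\in\mathbb{R}^E$ with flow conservation at every node and $0\le x\le u$; $b(x)=\sum_eb_ex_e$. The transformed problem replaces the budget $B$ by $B'=B+\tfrac12$. A basis structure is a tuple $(L,T,U,\bar e)$, $\bar e\in E$, $L,T,U$ a partition of $E\setminus\{\bar e\}$, $T$ a spanning tree of the underlying undirected graph, such that the unique cycle $C(\bar e)$ in $T\cup\{\bar e\}$ (oriented along $\bar e$, with forward edges $C^+$ and backward edges $C^-$) has $\sum_{C^+}b-\sum_{C^-}b\neq0$. Its basic solution for the transformed problem is the unique $x$ with flow conservation at every node, $x=0$ on $L$, $x=u$ on $U$, and $b(x)=B'$; it is feasible if $0\le x\le u$. *)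

theory Defs
  imports Complex_Main
begin

text \<open>Parallel edges and loops are allowed.
  An undirected traversal step is a pair (e, d): d = True means e is traversed
  from tail to head (forward), d = False means from head to tail (backward).\<close>

definition step_start :: "('e \<Rightarrow> 'v) \<Rightarrow> ('e \<Rightarrow> 'v) \<Rightarrow> 'e \<times> bool \<Rightarrow> 'v" where
  "step_start tai hea s = (if snd s then tai (fst s) else hea (fst s))"

definition step_end :: "('e \<Rightarrow> 'v) \<Rightarrow> ('e \<Rightarrow> 'v) \<Rightarrow> 'e \<times> bool \<Rightarrow> 'v" where
  "step_end tai hea s = (if snd s then hea (fst s) else tai (fst s))"

definition is_cycle :: "('e \<Rightarrow> 'v) \<Rightarrow> ('e \<Rightarrow> 'v) \<Rightarrow> 'e set \<Rightarrow> ('e \<times> bool) list \<Rightarrow> bool" where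
  "is_cycle tai hea F c \<longleftrightarrow>
     c \<noteq> [] \<and> set (map fst c) \<subseteq> F \<and> distinct (map fst c) \<and>
     distinct (map (step_start tai hea) c) \<and>
     (\<forall>i < length c. step_end tai hea (c ! i) = step_start tai hea (c ! ((i + 1) mod length c)))"

definition undir_rel :: "('e \<Rightarrow> 'v) \<Rightarrow> ('e \<Rightarrow> 'v) \<Rightarrow> 'e set \<Rightarrow> ('v \<times> 'v) set" where
  "undir_rel tai hea F = {(tai e, hea e) | e. e \<in> F} \<union> {(hea e, tai e) | e. e \<in> F}"

definition spanning_tree :: "'v set \<Rightarrow> 'e set \<Rightarrow> ('e \<Rightarrow> 'v) \<Rightarrow> ('e \<Rightarrow> 'v) \<Rightarrow> 'e set \<Rightarrow> bool" where
  "spanning_tree V E tai hea T \<longleftrightarrow>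
     T \<subseteq> E \<and>
     (\<forall>u\<in>V. \<forall>v\<in>V. (u, v) \<in> (undir_rel tai hea T)\<^sup>*) \<and>
     \<not> (\<exists>c. is_cycle tai hea T c)"

text \<open>C(ebar) is the unique cycle in T \<union> {ebar}; it is represented by any cycle list in
  T \<union> {ebar} traversing ebar forward (unique up to rotation since T is a spanning tree).\<close>
definition fund_cycle :: "('e \<Rightarrow> 'v) \<Rightarrow> ('e \<Rightarrow> 'v) \<Rightarrow> 'e set \<Rightarrow> 'e \<Rightarrow> ('e \<times> bool) list \<Rightarrow> bool" where
  "fund_cycle tai hea T eb c \<longleftrightarrow> is_cycle tai hea (insert eb T) c \<and> (eb, True) \<in> set c"

definition cycle_fee :: "('e \<Rightarrow> nat) \<Rightarrow> ('e \<times> bool) list \<Rightarrow> int" where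
  "cycle_fee b c = (\<Sum>s\<leftarrow>c. if snd s then int (b (fst s)) else - int (b (fst s)))"

definition basis_structure ::
  "'v set \<Rightarrow> 'e set \<Rightarrow> ('e \<Rightarrow> 'v) \<Rightarrow> ('e \<Rightarrow> 'v) \<Rightarrow> ('e \<Rightarrow> nat) \<Rightarrow>
   'e set \<Rightarrow> 'e set \<Rightarrow> 'e set \<Rightarrow> 'e \<Rightarrow> bool" where
  "basis_structure V E tai hea b L T U eb \<longleftrightarrow>
     eb \<in> E \<and> L \<union> T \<union> U = E - {eb} \<and>
     L \<inter> T = {} \<and> L \<inter> U = {} \<and> T \<inter> U = {} \<and>
     spanning_tree V E tai hea T \<and>
     (\<forall>c. fund_cycle tai hea T eb c \<longrightarrow> cycle_fee b c \<noteq> 0)"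

definition flow_conservation :: "'v set \<Rightarrow> 'e set \<Rightarrow> ('e \<Rightarrow> 'v) \<Rightarrow> ('e \<Rightarrow> 'v) \<Rightarrow> ('e \<Rightarrow> real) \<Rightarrow> bool" where
  "flow_conservation V E tai hea x \<longleftrightarrow>
     (\<forall>v\<in>V. (\<Sum>e\<in>{e\<in>E. hea e = v}. x e) = (\<Sum>e\<in>{e\<in>E. tai e = v}. x e))"

text \<open>x is the basic solution of the basis structure (L,T,U,ebar) for the transformed
  problem with budget B' = B + 1/2 (it is unique, so "the" basic solution).\<close>
definition basic_solution ::
  "'v set \<Rightarrow> 'e set \<Rightarrow> ('e \<Rightarrow> 'v) \<Rightarrow> ('e \<Rightarrow> 'v) \<Rightarrow> ('e \<Rightarrow> nat) \<Rightarrow> ('e \<Rightarrow> nat) \<Rightarrow> nat \<Rightarrow>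
   'e set \<Rightarrow> 'e set \<Rightarrow> 'e set \<Rightarrow> 'e \<Rightarrow> ('e \<Rightarrow> real) \<Rightarrow> bool" where
  "basic_solution V E tai hea u b B L T U eb x \<longleftrightarrow>
     flow_conservation V E tai hea x \<and>
     (\<forall>e\<in>L. x e = 0) \<and> (\<forall>e\<in>U. x e = real (u e)) \<and>
     (\<Sum>e\<in>E. real (b e) * x e) = real B + 1/2"

definition feasible_flow :: "'e set \<Rightarrow> ('e \<Rightarrow> nat) \<Rightarrow> ('e \<Rightarrow> real) \<Rightarrow> bool" where
  "feasible_flow E u x \<longleftrightarrow> (\<forall>e\<in>E. 0 \<le> x e \<and> x e \<le> real (u e))"

end

theory Submission
  imports Defs
begin


definition pth :: "('e \<Rightarrow> 'v) \<Rightarrow> ('e \<Rightarrow> 'v) \<Rightarrow> 'e set \<Rightarrow> ('e \<times> bool) list \<Rightarrow> bool" where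
  "pth tai hea N p \<longleftrightarrow> p \<noteq> [] \<and> set (map fst p) \<subseteq> N \<and> distinct (map fst p) \<and>
     distinct (map (step_start tai hea) p @ [step_end tai hea (last p)]) \<and>
     (\<forall>i. Suc i < length p \<longrightarrow> step_end tai hea (p!i) = step_start tai hea (p!Suc i))"

lemma step_ends: "{step_start tai hea s, step_end tai hea s} = {tai (fst s), hea (fst s)}"
  by (auto simp: step_start_def step_end_def)

lemma find_cycle:
  assumes fin: "finite N" and nl: "\<forall>e\<in>N. tai e \<noteq> hea e" and ne: "N \<noteq> {}"
    and deg: "\<forall>e\<in>N. \<forall>v\<in>{tai e, hea e}. \<exists>e'\<in>N. e' \<noteq> e \<and> v \<in> {tai e', hea e'}"
  shows "\<exists>c. is_cycle tai hea N c"
proof -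
  let ?ss = "step_start tai hea" and ?se = "step_end tai hea"
  obtain e0 where e0: "e0 \<in> N" using ne by auto
  have p0: "pth tai hea N [(e0,True)]" using e0 nl
    by (auto simp: pth_def step_start_def step_end_def)
  have bnd: "\<forall>p. pth tai hea N p \<longrightarrow> length p < Suc (card N)"
  proof (intro allI impI)
    fix p assume "pth tai hea N p"
    hence "set (map fst p) \<subseteq> N" "distinct (map fst p)" by (auto simp: pth_def)
    hence "length p \<le> card N" using fin
      by (metis card_mono distinct_card length_map)
    thus "length p < Suc (card N)" by simp
  qed
  obtain p where pp: "pth tai hea N p" and mx: "\<forall>q. pth tai hea N q \<longrightarrow> length q \<le> length p"
    using ex_has_greatest_nat[of "pth tai hea N", OF p0 bnd] by blast
  have pne: "p \<noteq> []" and pN: "set (map fst p) \<subseteq> N" and pde: "distinct (map fst p)"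
    and pdv: "distinct (map ?ss p @ [?se (last p)])"
    and pcon: "\<forall>i. Suc i < length p \<longrightarrow> ?se (p!i) = ?ss (p!Suc i)"
    using pp by (auto simp: pth_def)
  define v where "v = ?se (last p)"
  define l where "l = last p"
  have lin: "l \<in> set p" using pne l_def by simp
  have vnot: "v \<notin> set (map ?ss p)" using pdv v_def by simp
  have "fst l \<in> N" using lin pN by auto
  moreover have "v \<in> {tai (fst l), hea (fst l)}" using step_ends[of tai hea l] v_def l_def by blast
  ultimately obtain e' where e'N: "e' \<in> N" and e'l: "e' \<noteq> fst l" and ve': "v \<in> {tai e', hea e'}"
    using deg by blast
  define s' where "s' = (e', tai e' = v)"
  have ss': "?ss s' = v" using ve' by (auto simp: s'_def step_start_def)
  define v' where "v' = ?se s'"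
  have vv': "v' \<noteq> v" using ve' nl e'N by (auto simp: s'_def v'_def step_end_def)
  have e'notin: "e' \<notin> set (map fst p)"
  proof
    assume "e' \<in> set (map fst p)"
    then obtain i where i: "i < length p" "fst (p!i) = e'"
      by (metis in_set_conv_nth length_map nth_map)
    have "v \<in> {?ss (p!i), ?se (p!i)}" using step_ends[of tai hea "p!i"] i ve' by auto
    moreover have "v \<noteq> ?ss (p!i)" using vnot i by (metis nth_map nth_mem length_map)
    ultimately have vi: "v = ?se (p!i)" by blast
    show False
    proof (cases "Suc i < length p")
      case True
      hence "v = ?ss (p!Suc i)" using pcon vi by simp
      thus False using vnot True by (metis nth_map nth_mem length_map)
    next
      case False
      hence "i = length p - 1" using i by simp
      hence "p!i = l" using l_def pne by (simp add: last_conv_nth)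
      thus False using i e'l by simp
    qed
  qed
  show ?thesis
  proof (cases "v' \<in> set (map ?ss p)")
    case False
    have "pth tai hea N (p @ [s'])"
      unfolding pth_def
    proof (intro conjI)
      show "p @ [s'] \<noteq> []" by simp
      show "set (map fst (p @ [s'])) \<subseteq> N" using pN e'N by (simp add: s'_def)
      show "distinct (map fst (p @ [s']))" using pde e'notin by (simp add: s'_def)
      show "distinct (map ?ss (p @ [s']) @ [?se (last (p @ [s']))])"
        using pdv False vv' ss' vnot by (simp add: v'_def)
      show "\<forall>i. Suc i < length (p @ [s']) \<longrightarrow> ?se ((p @ [s'])!i) = ?ss ((p @ [s'])!Suc i)"
      proof (intro allI impI)
        fix i assume "Suc i < length (p @ [s'])"
        hence "Suc i < length p \<or> Suc i = length p" by (simp, linarith)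
        thus "?se ((p @ [s'])!i) = ?ss ((p @ [s'])!Suc i)"
        proof
          assume "Suc i < length p" thus ?thesis using pcon by (simp add: nth_append)
        next
          assume a: "Suc i = length p"
          hence "p!i = last p" by (metis diff_Suc_1 last_conv_nth pne)
          thus ?thesis using a ss' v_def by (simp add: nth_append)
        qed
      qed
    qed
    hence "length (p @ [s']) \<le> length p" using mx by blast
    thus ?thesis by simp
  next
    case True
    then obtain j where j: "j < length p" "?ss (p!j) = v'"
      by (metis in_set_conv_nth length_map nth_map)
    define c where "c = drop j p @ [s']"
    define m where "m = length p - j"
    have m1: "m \<ge> 1" using j m_def by simp
    have lc: "length c = Suc m" using c_def m_def by simp
    have cnth: "\<And>i. i < m \<Longrightarrow> c!i = p!(j+i)" using j by (simp add: c_def m_def nth_append)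
    have cm: "c!m = s'" using c_def m_def j by (simp add: nth_append)
    have "is_cycle tai hea N c"
      unfolding is_cycle_def
    proof (intro conjI)
      show "c \<noteq> []" by (simp add: c_def)
      show "set (map fst c) \<subseteq> N" using pN e'N set_drop_subset[of j p] by (auto simp: c_def s'_def)
      have "distinct (map fst (drop j p))" using pde by (simp add: drop_map[symmetric])
      moreover have "e' \<notin> set (map fst (drop j p))" using e'notin
        by (metis drop_map in_set_dropD)
      ultimately show "distinct (map fst c)" by (simp add: c_def s'_def)
      have "distinct (map ?ss (drop j p))" using pdv by (simp add: drop_map[symmetric])
      moreover have "v \<notin> set (map ?ss (drop j p))" using vnot by (metis drop_map in_set_dropD)
      ultimately show "distinct (map ?ss c)" by (simp add: c_def ss')
      show "\<forall>i<length c. ?se (c ! i) = ?ss (c ! ((i + 1) mod length c))"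
      proof (intro allI impI)
        fix i assume "i < length c"
        hence "i < m - 1 \<or> i = m - 1 \<or> i = m" using lc by linarith
        thus "?se (c ! i) = ?ss (c ! ((i + 1) mod length c))"
        proof (elim disjE)
          assume a: "i < m - 1"
          hence "(i+1) mod length c = Suc i" using lc by simp
          moreover have "c!i = p!(j+i)" "c!(Suc i) = p!Suc(j+i)" using a cnth by auto
          moreover have "Suc (j+i) < length p" using a m_def by simp
          ultimately show ?thesis using pcon by simp
        next
          assume a: "i = m - 1"
          hence "(i+1) mod length c = m" using lc m1 by simp
          moreover have "c!i = p!(length p - 1)" using a cnth m1 m_def j by simp
          moreover have "p!(length p - 1) = last p" using pne by (simp add: last_conv_nth)
          ultimately show ?thesis using cm ss' v_def by simp
        next
          assume a: "i = m"
          hence "(i+1) mod length c = 0" using lc by simp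
          moreover have "c!0 = p!j" using cnth m1 using cnth[of 0] m1 by simp
          ultimately show ?thesis using a cm j v'_def by simp
        qed
      qed
    qed
    thus ?thesis by blast
  qed
qed



lemma sum_list_rotate1_map: "(\<Sum>s\<leftarrow>rotate1 xs. f s) = (\<Sum>s\<leftarrow>xs. (f s :: real))"
  by (cases xs) (simp_all add: add.commute)

lemma map_se_rotate:
  assumes "\<forall>i < length c. se (c ! i) = ss (c ! ((i + 1) mod length c))"
  shows "map se c = rotate1 (map ss c)"
proof (rule nth_equalityI)
  show "length (map se c) = length (rotate1 (map ss c))" by simp
  fix i assume "i < length (map se c)"
  hence i: "i < length c" by simp
  have "rotate1 (map ss c) ! i = rotate 1 (map ss c) ! i" by simp
  also have "\<dots> = (map ss c) ! ((1 + i) mod length c)" using i by (subst nth_rotate) auto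
  also have "\<dots> = ss (c ! ((i+1) mod length c))"
  proof -
    have "(1+i) mod length c < length c" using i by (intro mod_less_divisor) linarith
    thus ?thesis by (simp add: add.commute)
  qed
  finally show "map se c ! i = rotate1 (map ss c) ! i" using assms i by simp
qed

lemma count_balance:
  assumes "map se c = rotate1 (map ss c)"
  shows "(\<Sum>s\<leftarrow>c. (if se s = v then 1 else 0::real)) = (\<Sum>s\<leftarrow>c. (if ss s = v then 1 else 0))"
proof -
  have "(\<Sum>s\<leftarrow>c. (if se s = v then 1 else 0::real)) = (\<Sum>y\<leftarrow>map se c. (if y = v then 1 else 0))"
    by (simp add: comp_def)
  also have "\<dots> = (\<Sum>y\<leftarrow>rotate1 (map ss c). (if y = v then 1 else 0))" using assms by simp
  also have "\<dots> = (\<Sum>y\<leftarrow>map ss c. (if y = v then 1 else 0))" by (rule sum_list_rotate1_map)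
  also have "\<dots> = (\<Sum>s\<leftarrow>c. (if ss s = v then 1 else 0))" by (simp add: comp_def)
  finally show ?thesis .
qed

lemma sum_over_cycle:
  fixes g :: "'e \<Rightarrow> real"
  assumes fin: "finite E" and sub: "set (map fst c) \<subseteq> E" and dis: "distinct (map fst c)"
  defines "chi \<equiv> (\<lambda>e. if (e,True) \<in> set c then 1 else if (e,False) \<in> set c then -1 else 0::real)"
  shows "(\<Sum>e\<in>E. g e * chi e) = (\<Sum>s\<leftarrow>c. g (fst s) * (if snd s then 1 else -1))"
proof -
  have inj: "inj_on fst (set c)" using dis by (simp add: distinct_map)
  have chis: "\<And>s. s \<in> set c \<Longrightarrow> chi (fst s) = (if snd s then 1 else -1)"
  proof -
    fix s assume s: "s \<in> set c"
    obtain e d where sd: "s = (e,d)" by force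
    have "(e, \<not> d) \<notin> set c" using inj s sd by (metis inj_on_eq_iff fst_conv prod.inject)
    thus "chi (fst s) = (if snd s then 1 else -1)" using s sd by (cases d) (auto simp: chi_def)
  qed
  have "(\<Sum>e\<in>E. g e * chi e) = (\<Sum>e\<in>fst ` set c. g e * chi e)"
  proof (rule sum.mono_neutral_right)
    show "finite E" by fact
    show "fst ` set c \<subseteq> E" using sub by simp
    show "\<forall>i\<in>E - fst ` set c. g i * chi i = 0"
    proof
      fix i assume "i \<in> E - fst ` set c"
      hence "(i,True) \<notin> set c" "(i,False) \<notin> set c" by (metis DiffD2 fst_conv image_eqI)+
      thus "g i * chi i = 0" by (simp add: chi_def)
    qed
  qed
  also have "\<dots> = (\<Sum>s\<in>set c. g (fst s) * chi (fst s))" using inj by (simp add: sum.reindex)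
  also have "\<dots> = (\<Sum>s\<in>set c. g (fst s) * (if snd s then 1 else -1))"
    using chis by (intro sum.cong) auto
  also have "\<dots> = (\<Sum>s\<leftarrow>c. g (fst s) * (if snd s then 1 else -1))"
    using dis by (simp add: sum_list_distinct_conv_sum_set distinct_map)
  finally show ?thesis .
qed

lemma of_int_fee: "real_of_int (cycle_fee b c) = (\<Sum>s\<leftarrow>c. real (b (fst s)) * (if snd s then 1 else -1))"
  unfolding cycle_fee_def by (induction c) auto

lemma half_not_int: "(1/2::real) \<notin> \<int>"
proof
  assume "(1/2::real) \<in> \<int>"
  then obtain k where "(1/2::real) = of_int k" by (auto elim: Ints_cases)
  hence "(1::real) = of_int (2*k)" by simp
  hence "1 = 2*k" by linarith
  thus False by presburger
qed



theorem lemma3: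
  fixes V :: "'v set" and E :: "'e set" and tai hea :: "'e \<Rightarrow> 'v"
    and u b :: "'e \<Rightarrow> nat" and c :: "'e \<Rightarrow> int" and B :: nat
    and L T U :: "'e set" and eb :: 'e and x :: "'e \<Rightarrow> real"
  assumes "finite V" and "finite E"
    and "\<forall>e\<in>E. tai e \<in> V \<and> hea e \<in> V"
    and "basis_structure V E tai hea b L T U eb"
    and "basic_solution V E tai hea u b B L T U eb x"
    and "feasible_flow E u x"
  shows "\<forall>cyc. fund_cycle tai hea T eb cyc \<longrightarrow> (\<forall>e\<in>set (map fst cyc). x e \<notin> \<nat>)"
proof (intro allI impI ballI)
  fix cyc e
  assume fc: "fund_cycle tai hea T eb cyc" and ein: "e \<in> set (map fst cyc)"
  let ?ss = "step_start tai hea" and ?se = "step_end tai hea"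
  have fin: "finite E" by fact
  have ends: "\<forall>e\<in>E. tai e \<in> V \<and> hea e \<in> V" by fact
  have bs: "eb \<in> E" "L \<union> T \<union> U = E - {eb}" "L \<inter> T = {}" "L \<inter> U = {}" "T \<inter> U = {}"
    "T \<subseteq> E" "\<not> (\<exists>c. is_cycle tai hea T c)" "cycle_fee b cyc \<noteq> 0"
    using assms(4) fc by (auto simp: basis_structure_def spanning_tree_def)
  have sol: "flow_conservation V E tai hea x" "\<forall>e\<in>L. x e = 0" "\<forall>e\<in>U. x e = real (u e)"
    "(\<Sum>e\<in>E. real (b e) * x e) = real B + 1/2"
    using assms(5) by (auto simp: basic_solution_def)
  have cyc: "cyc \<noteq> []" "set (map fst cyc) \<subseteq> insert eb T" "distinct (map fst cyc)"
    "\<forall>i < length cyc. ?se (cyc ! i) = ?ss (cyc ! ((i + 1) mod length cyc))"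
    "(eb, True) \<in> set cyc"
    using fc by (auto simp: fund_cycle_def is_cycle_def)
  have cycE: "set (map fst cyc) \<subseteq> E" using cyc(2) bs by auto
  define chi where "chi = (\<lambda>e. if (e,True) \<in> set cyc then 1 else if (e,False) \<in> set cyc then -1 else 0::real)"
  define sg where "sg = (\<lambda>s::'e\<times>bool. if snd s then 1 else -1::real)"
  have soc: "\<And>g. (\<Sum>e\<in>E. g e * chi e) = (\<Sum>s\<leftarrow>cyc. g (fst s) * sg s)"
    using sum_over_cycle[OF fin cycE cyc(3)] by (simp add: chi_def sg_def)
  have chi0: "\<And>e. e \<notin> set (map fst cyc) \<Longrightarrow> chi e = 0"
    by (auto simp: chi_def) (metis fst_conv image_eqI)+
  have chieb: "chi eb = 1" using cyc(5) by (simp add: chi_def)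
  have chipm: "\<And>e. e \<in> set (map fst cyc) \<Longrightarrow> chi e = 1 \<or> chi e = -1"
    by (auto simp: chi_def) (metis (full_types))
  have rot: "map ?se cyc = rotate1 (map ?ss cyc)" by (rule map_se_rotate[OF cyc(4)])
  have circ: "\<And>v. (\<Sum>e\<in>{e\<in>E. hea e = v}. chi e) = (\<Sum>e\<in>{e\<in>E. tai e = v}. chi e)"
  proof -
    fix v
    have "(\<Sum>e\<in>{e\<in>E. hea e = v}. chi e) = (\<Sum>e\<in>E. (if hea e = v then 1 else 0) * chi e)"
      using fin by (simp add: sum.inter_filter) (rule sum.cong, auto)
    also have "\<dots> = (\<Sum>s\<leftarrow>cyc. (if hea (fst s) = v then 1 else 0) * sg s)" by (rule soc)
    finally have h: "(\<Sum>e\<in>{e\<in>E. hea e = v}. chi e) = (\<Sum>s\<leftarrow>cyc. (if hea (fst s) = v then 1 else 0) * sg s)" .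
    have "(\<Sum>e\<in>{e\<in>E. tai e = v}. chi e) = (\<Sum>e\<in>E. (if tai e = v then 1 else 0) * chi e)"
      using fin by (simp add: sum.inter_filter) (rule sum.cong, auto)
    also have "\<dots> = (\<Sum>s\<leftarrow>cyc. (if tai (fst s) = v then 1 else 0) * sg s)" by (rule soc)
    finally have t: "(\<Sum>e\<in>{e\<in>E. tai e = v}. chi e) = (\<Sum>s\<leftarrow>cyc. (if tai (fst s) = v then 1 else 0) * sg s)" .
    have pt: "\<And>s. (if hea (fst s) = v then 1 else 0) * sg s - (if tai (fst s) = v then 1 else 0) * sg s
        = (if ?se s = v then 1 else 0) - (if ?ss s = v then (1::real) else 0)"
      by (auto simp: sg_def step_start_def step_end_def)
    have "(\<Sum>s\<leftarrow>cyc. (if hea (fst s) = v then 1 else 0) * sg s) - (\<Sum>s\<leftarrow>cyc. (if tai (fst s) = v then 1 else 0) * sg s)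
      = (\<Sum>s\<leftarrow>cyc. (if hea (fst s) = v then 1 else 0) * sg s - (if tai (fst s) = v then 1 else 0) * sg s)"
      by (simp add: sum_list_subtractf)
    also have "\<dots> = (\<Sum>s\<leftarrow>cyc. (if ?se s = v then 1 else 0) - (if ?ss s = v then (1::real) else 0))"
      using pt by simp
    also have "\<dots> = (\<Sum>s\<leftarrow>cyc. (if ?se s = v then 1 else 0)) - (\<Sum>s\<leftarrow>cyc. (if ?ss s = v then (1::real) else 0))"
      by (simp add: sum_list_subtractf)
    also have "\<dots> = 0" using count_balance[OF rot, of v] by simp
    finally show "(\<Sum>e\<in>{e\<in>E. hea e = v}. chi e) = (\<Sum>e\<in>{e\<in>E. tai e = v}. chi e)"
      using h t by simp
  qed
  have xcons: "\<And>v. (\<Sum>e\<in>{e\<in>E. hea e = v}. x e) = (\<Sum>e\<in>{e\<in>E. tai e = v}. x e)"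
  proof -
    fix v show "(\<Sum>e\<in>{e\<in>E. hea e = v}. x e) = (\<Sum>e\<in>{e\<in>E. tai e = v}. x e)"
    proof (cases "v \<in> V")
      case True thus ?thesis using sol(1) by (simp add: flow_conservation_def)
    next
      case False
      hence "{e\<in>E. hea e = v} = {}" "{e\<in>E. tai e = v} = {}" using ends by auto
      thus ?thesis by (simp only:)
    qed
  qed
  define w where "w = (\<lambda>e. x e - x eb * chi e)"
  have wcons: "\<And>v. (\<Sum>e\<in>{e\<in>E. hea e = v}. w e) = (\<Sum>e\<in>{e\<in>E. tai e = v}. w e)"
    using xcons circ by (simp add: w_def sum_subtractf sum_distrib_left[symmetric])
  define N where "N = {e\<in>T. w e \<notin> \<int>}"
  have wint: "\<And>e. e \<in> E \<Longrightarrow> e \<notin> N \<Longrightarrow> w e \<in> \<int>"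
  proof -
    fix e assume e: "e \<in> E" "e \<notin> N"
    have "e = eb \<or> e \<in> L \<or> e \<in> T \<or> e \<in> U" using e bs(2) by blast
    moreover have "e \<in> L \<or> e \<in> U \<Longrightarrow> chi e = 0"
      using chi0 cyc(2) bs by blast
    ultimately show "w e \<in> \<int>"
    proof (elim disjE)
      assume "e = eb" thus ?thesis using chieb by (simp add: w_def)
    next
      assume a: "e \<in> L" "e \<in> L \<or> e \<in> U \<Longrightarrow> chi e = 0"
      thus ?thesis using sol(2) by (simp add: w_def)
    next
      assume "e \<in> T" thus ?thesis using e(2) by (simp add: N_def)
    next
      assume a: "e \<in> U" "e \<in> L \<or> e \<in> U \<Longrightarrow> chi e = 0"
      thus ?thesis using sol(3) by (simp add: w_def)
    qed
  qed
  have noloop: "\<forall>e\<in>T. tai e \<noteq> hea e"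
  proof
    fix e assume e: "e \<in> T"
    show "tai e \<noteq> hea e"
    proof
      assume "tai e = hea e"
      hence "is_cycle tai hea T [(e,True)]" using e
        by (simp add: is_cycle_def step_start_def step_end_def)
      thus False using bs(7) by blast
    qed
  qed
  have NT: "N \<subseteq> T" by (auto simp: N_def)
  have Nempty: "N = {}"
  proof (rule ccontr)
    assume ne: "N \<noteq> {}"
    have finN: "finite N" by (rule finite_subset[OF NT finite_subset[OF bs(6) fin]])
    have deg: "\<forall>e\<in>N. \<forall>v\<in>{tai e, hea e}. \<exists>e'\<in>N. e' \<noteq> e \<and> v \<in> {tai e', hea e'}"
    proof (intro ballI, rule ccontr)
      fix e v assume eN: "e \<in> N" and v: "v \<in> {tai e, hea e}"
        and no: "\<not> (\<exists>e'\<in>N. e' \<noteq> e \<and> v \<in> {tai e', hea e'})"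
      have eE: "e \<in> E" using eN NT bs(6) by blast
      have nl: "tai e \<noteq> hea e" using noloop eN NT by blast
      have R: "\<And>P. (\<And>e'. P e' \<Longrightarrow> v \<in> {tai e', hea e'}) \<Longrightarrow> (\<Sum>e'\<in>{e'\<in>E. P e'} - {e}. w e') \<in> \<int>"
      proof -
        fix P assume hP: "\<And>e'. P e' \<Longrightarrow> v \<in> {tai e', hea e'}"
        show "(\<Sum>e'\<in>{e'\<in>E. P e'} - {e}. w e') \<in> \<int>"
        proof (rule Ints_sum)
          fix e' assume "e' \<in> {e'\<in>E. P e'} - {e}"
          hence "e' \<in> E" "e' \<noteq> e" "v \<in> {tai e', hea e'}" using hP by auto
          hence "e' \<notin> N" using no by blast
          thus "w e' \<in> \<int>" using wint \<open>e' \<in> E\<close> by blast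
        qed
      qed
      have Rh: "(\<Sum>e'\<in>{e'\<in>E. hea e' = v} - {e}. w e') \<in> \<int>" by (rule R) auto
      have Rt: "(\<Sum>e'\<in>{e'\<in>E. tai e' = v} - {e}. w e') \<in> \<int>" by (rule R) auto
      have split: "\<And>P. (\<Sum>e'\<in>{e'\<in>E. P e'}. w e') = (if P e then w e else 0) + (\<Sum>e'\<in>{e'\<in>E. P e'} - {e}. w e')"
      proof -
        fix P :: "'e \<Rightarrow> bool"
        show "(\<Sum>e'\<in>{e'\<in>E. P e'}. w e') = (if P e then w e else 0) + (\<Sum>e'\<in>{e'\<in>E. P e'} - {e}. w e')"
        proof (cases "P e")
          case True thus ?thesis using fin eE by (simp add: sum.remove)
        next
          case False
          hence "{e'\<in>E. P e'} - {e} = {e'\<in>E. P e'}" by auto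
          thus ?thesis using False by simp
        qed
      qed
      have eq: "(if hea e = v then w e else 0) + (\<Sum>e'\<in>{e'\<in>E. hea e' = v} - {e}. w e')
          = (if tai e = v then w e else 0) + (\<Sum>e'\<in>{e'\<in>E. tai e' = v} - {e}. w e')"
        using wcons[of v] split[of "\<lambda>e'. hea e' = v"] split[of "\<lambda>e'. tai e' = v"] by simp
      have "w e \<in> \<int>"
      proof (cases "hea e = v")
        case True
        hence "tai e \<noteq> v" using nl by simp
        hence "w e = (\<Sum>e'\<in>{e'\<in>E. tai e' = v} - {e}. w e') - (\<Sum>e'\<in>{e'\<in>E. hea e' = v} - {e}. w e')"
          using eq True by simp
        thus ?thesis using Rh Rt by (simp add: Ints_diff)
      next
        case False
        hence "tai e = v" using v by simp
        hence "w e = (\<Sum>e'\<in>{e'\<in>E. hea e' = v} - {e}. w e') - (\<Sum>e'\<in>{e'\<in>E. tai e' = v} - {e}. w e')"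
          using eq False by simp
        thus ?thesis using Rh Rt by (simp add: Ints_diff)
      qed
      thus False using eN by (simp add: N_def)
    qed
    obtain cc where "is_cycle tai hea N cc"
      using find_cycle[OF finN _ ne deg] noloop NT by blast
    hence "is_cycle tai hea T cc" using NT by (auto simp: is_cycle_def)
    thus False using bs(7) by blast
  qed
  have wallint: "\<And>e. e \<in> E \<Longrightarrow> w e \<in> \<int>" using wint Nempty by blast
  have "(\<Sum>e\<in>E. real (b e) * x e) = (\<Sum>e\<in>E. real (b e) * w e) + x eb * (\<Sum>e\<in>E. real (b e) * chi e)"
  proof -
    have "(\<Sum>e\<in>E. real (b e) * x e) = (\<Sum>e\<in>E. real (b e) * w e + x eb * (real (b e) * chi e))"
      by (rule sum.cong) (simp_all add: w_def algebra_simps)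
    thus ?thesis by (simp add: sum.distrib sum_distrib_left)
  qed
  also have "(\<Sum>e\<in>E. real (b e) * chi e) = real_of_int (cycle_fee b cyc)"
    using soc[of "\<lambda>e. real (b e)"] of_int_fee[of b cyc] by (simp add: sg_def)
  finally have bud: "real B + 1/2 = (\<Sum>e\<in>E. real (b e) * w e) + x eb * real_of_int (cycle_fee b cyc)"
    using sol(4) by simp
  have Wint: "(\<Sum>e\<in>E. real (b e) * w e) \<in> \<int>"
    using wallint by (intro Ints_sum Ints_mult) auto
  show "x e \<notin> \<nat>"
  proof
    assume "x e \<in> \<nat>"
    hence xi: "x e \<in> \<int>" by (simp add: Nats_subset_Ints[THEN subsetD])
    have eE: "e \<in> E" using ein cycE by blast
    have "x eb * chi e = x e - w e" by (simp add: w_def)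
    hence xc: "x eb * chi e \<in> \<int>" using xi wallint[OF eE] by (simp add: Ints_diff)
    have "x eb \<in> \<int>"
    proof (cases "chi e = 1")
      case True thus ?thesis using xc by simp
    next
      case False
      hence "chi e = -1" using chipm ein by blast
      hence "- x eb \<in> \<int>" using xc by simp
      hence "- (- x eb) \<in> \<int>" by (rule Ints_minus)
      thus ?thesis by simp
    qed
    hence xf: "x eb * real_of_int (cycle_fee b cyc) \<in> \<int>" by (intro Ints_mult) auto
    have S: "(\<Sum>e\<in>E. real (b e) * w e) + x eb * real_of_int (cycle_fee b cyc) \<in> \<int>"
      by (rule Ints_add[OF Wint xf])
    have "real B + 1/2 \<in> \<int>" unfolding bud by (rule S)
    hence "real B + 1/2 - real B \<in> \<int>" by (rule Ints_diff[OF _ Ints_of_nat])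
    hence "(1/2::real) \<in> \<int>" by simp
    thus False using half_not_int by blast
  qed
qed

end
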